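(* Let $p_1,\ldots,p_m\in\mathbb Z_{>0}$, $p=\operatorname{lcm}(p_1,\ldots,p_m)$, let $\alpha_1,\ldots,\alpha_m$ be words, $e_1,\ldots,e_m\in\mathbb Z_{\ge0}$, and $z,q\in\mathbb C$. Then for every positive integer $k$, \[ S(k)=\sum_{n=1}^{k}z^n n^q\prod_{j=1}^{m}\mathcal H_{\alpha_j}(p_jn)^{e_j}\in\operatorname{span}_{\mathbb C}\{\mathcal H_\beta(pk)\}_\beta, \] where $\beta$ ranges over words.
   Context: A letter is a pair $(r,s)\in\mathbb C^2$ and a word is a finite sequence of letters. For a word $\alpha=((r_1,s_1),\ldots,(r_d,s_d))$ and a positive integer $N$, \[ \mathcal H_{\alpha}(N)=\sum_{N\ge n_1>\cdots>n_d\ge1}\prod_{i=1}^{d}\frac{s_i^{n_i}}{n_i^{r_i}},\qquad \mathcal H_\emptyset(N)=1, \] with $n^r=\exp(r\log n)$ using the real logarithm. *)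

theory Defs
  imports Complex_Main
begin

type_synonym letter = "complex \<times> complex"
type_synonym word = "letter list"

definition npow :: "nat \<Rightarrow> complex \<Rightarrow> complex" where
  "npow n r = exp (r * complex_of_real (ln (real n)))"

definition idx_seqs :: "nat \<Rightarrow> nat \<Rightarrow> nat list set" where
  "idx_seqs d N = {ns. length ns = d \<and> sorted_wrt (>) ns \<and> set ns \<subseteq> {1..N}}"

definition H :: "word \<Rightarrow> nat \<Rightarrow> complex" where
  "H \<alpha> N = (\<Sum>ns\<in>idx_seqs (length \<alpha>) N.
      \<Prod>i<length \<alpha>. (snd (\<alpha> ! i)) ^ (ns ! i) / npow (ns ! i) (fst (\<alpha> ! i)))"

end

theory Submission imports Defs begin

definition tm :: "letter \<Rightarrow> nat \<Rightarrow> complex" where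
  "tm x M = snd x ^ M / npow M (fst x)"

definition mulL :: "letter \<Rightarrow> letter \<Rightarrow> letter" where
  "mulL x y = (fst x + fst y, snd x * snd y)"

lemma npow_nz: "npow n r \<noteq> 0" by (simp add: npow_def)

lemma tm_mul: "tm (mulL x y) M = tm x M * tm y M"
  by (simp add: tm_def mulL_def npow_def distrib_right exp_add power_mult_distrib)

lemma idx0: "idx_seqs 0 N = {[]}" by (auto simp: idx_seqs_def)

lemma idxSuc: "idx_seqs (Suc d) N = (\<lambda>(M,ns). M # ns) ` (SIGMA M:{1..N}. idx_seqs d (M - 1))"
proof (intro set_eqI iffI)
  fix xs assume "xs \<in> idx_seqs (Suc d) N"
  then obtain M ns where xs: "xs = M # ns" and h: "length ns = d" "\<forall>x\<in>set ns. x < M" "sorted_wrt (>) ns"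
     "M \<in> {1..N}" "set ns \<subseteq> {1..N}"
    by (cases xs) (auto simp: idx_seqs_def)
  hence "ns \<in> idx_seqs d (M - 1)" by (fastforce simp: idx_seqs_def subset_iff)
  thus "xs \<in> (\<lambda>(M,ns). M # ns) ` (SIGMA M:{1..N}. idx_seqs d (M - 1))" using h xs by force
next
  fix xs assume "xs \<in> (\<lambda>(M,ns). M # ns) ` (SIGMA M:{1..N}. idx_seqs d (M - 1))"
  then show "xs \<in> idx_seqs (Suc d) N" by (fastforce simp: idx_seqs_def subset_iff)
qed

lemma idx_finite: "finite (idx_seqs d N)"
  by (induction d arbitrary: N) (auto simp: idx0 idxSuc)

lemma H_Nil: "H [] N = 1" by (simp add: H_def idx0)

lemma H_Cons: "H (x # a) N = (\<Sum>M=1..N. tm x M * H a (M - 1))"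
proof -
  have inj: "inj_on (\<lambda>(M,ns). M # ns) (SIGMA M:{1..N}. idx_seqs (length a) (M - 1))"
    by (auto simp: inj_on_def)
  have "H (x # a) N = (\<Sum>(M,ns)\<in>(SIGMA M:{1..N}. idx_seqs (length a) (M - 1)).
      \<Prod>i<Suc (length a). (snd ((x#a) ! i)) ^ ((M#ns) ! i) / npow ((M#ns) ! i) (fst ((x#a) ! i)))"
    unfolding H_def length_Cons idxSuc by (subst sum.reindex[OF inj]) (simp add: comp_def case_prod_unfold)
  also have "\<dots> = (\<Sum>(M,ns)\<in>(SIGMA M:{1..N}. idx_seqs (length a) (M - 1)).
      tm x M * (\<Prod>i<length a. (snd (a ! i)) ^ (ns ! i) / npow (ns ! i) (fst (a ! i))))"
    by (intro sum.cong refl) (simp only: prod.lessThan_Suc_shift, simp add: tm_def case_prod_unfold)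
  also have "\<dots> = (\<Sum>M=1..N. tm x M * H a (M - 1))"
    by (subst sum.Sigma[symmetric]) (auto simp: idx_finite H_def sum_distrib_left)
  finally show ?thesis .
qed

lemma H_Cons0: "H (x # a) 0 = 0" by (simp add: H_Cons)

lemma H_step: "H (x # a) (Suc N) = H (x # a) N + tm x (Suc N) * H a N"
  by (simp add: H_Cons)

inductive inV :: "(nat \<Rightarrow> complex) \<Rightarrow> bool" where
  base: "inV (H b)"
| scale: "inV f \<Longrightarrow> inV (\<lambda>N. c * f N)"
| add: "inV f \<Longrightarrow> inV g \<Longrightarrow> inV (\<lambda>N. f N + g N)"

lemma inV_const: "inV (\<lambda>N. c)"
  using inV.scale[OF inV.base[of "[]"], of c] by (simp add: H_Nil)

lemma inV_cong: "inV f \<Longrightarrow> (\<And>N. f N = g N) \<Longrightarrow> inV g"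
proof -
  assume "inV f" "\<And>N. f N = g N"
  then have "f = g" by auto
  with \<open>inV f\<close> show ?thesis by simp
qed

lemma inV_sum: "finite S \<Longrightarrow> (\<And>i. i \<in> S \<Longrightarrow> inV (f i)) \<Longrightarrow> inV (\<lambda>N. \<Sum>i\<in>S. f i N)"
proof (induction S rule: finite_induct)
  case empty thus ?case using inV_const[of 0] by simp
next
  case (insert x F)
  then show ?case by (simp add: inV.add)
qed

lemma inV_Op: "inV g \<Longrightarrow> inV (\<lambda>N. \<Sum>M=1..N. tm x M * g (M - 1))"
proof (induction rule: inV.induct)
  case (base b)
  then show ?case using inV.base[of "x # b"] by (rule inV_cong) (simp add: H_Cons)
next
  case (scale f c)
  then show ?case using inV.scale[OF scale.IH, of c]
    by (simp add: sum_distrib_left algebra_simps)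
next
  case (add f g)
  then show ?case using inV.add[OF add.IH]
    by (simp add: sum.distrib algebra_simps)
qed

lemma H_stepM: "1 \<le> M \<Longrightarrow> H (b # a) M = H (b # a) (M - 1) + tm b M * H a (M - 1)"
  by (cases M) (auto simp: H_step)

lemma inV_tsum: "inV g \<Longrightarrow> inV (\<lambda>N. \<Sum>M=1..N. tm x M * g M)"
proof (induction rule: inV.induct)
  case (base b)
  show ?case
  proof (cases b)
    case Nil
    show ?thesis using inV.base[of "[x]"] by (rule inV_cong) (simp add: Nil H_Cons H_Nil)
  next
    case (Cons y c)
    have "(\<Sum>M=1..N. tm x M * H b M) = H (x # y # c) N + H (mulL x y # c) N" for N
      unfolding Cons H_Cons[of x] H_Cons[of "mulL x y"] tm_mul
      by (subst sum.distrib[symmetric], rule sum.cong, simp, subst H_stepM, auto simp: algebra_simps)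
    then show ?thesis using inV.add[OF inV.base inV.base] by (simp add: inV_cong)
  qed
next
  case (scale f c)
  then show ?case using inV.scale[OF scale.IH, of c]
    by (simp add: sum_distrib_left algebra_simps)
next
  case (add f g)
  then show ?case using inV.add[OF add.IH]
    by (simp add: sum.distrib algebra_simps)
qed

lemma inV_HH: "inV (\<lambda>N. H a N * H b N)"
proof (induction "length a + length b" arbitrary: a b rule: less_induct)
  case less
  show ?case
  proof (cases a)
    case Nil
    then show ?thesis using inV.base[of b] by (simp add: H_Nil)
  next
    case (Cons x a')
    note a = Cons
    show ?thesis
    proof (cases b)
      case Nil
      then show ?thesis using inV.base[of a] by (simp add: H_Nil)
    next
      case (Cons y b')
      have e: "H a N * H b N = (\<Sum>M=1..N. tm x M * (H a' (M-1) * H b (M-1)))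
         + (\<Sum>M=1..N. tm y M * (H a (M-1) * H b' (M-1)))
         + (\<Sum>M=1..N. tm (mulL x y) M * (H a' (M-1) * H b' (M-1)))" for N
      proof (induction N)
        case 0
        then show ?case by (simp add: a Cons H_Cons0)
      next
        case (Suc N)
        show ?case unfolding sum.cl_ivl_Suc using Suc
          by (simp add: a Cons H_step tm_mul algebra_simps)
      qed
      have i1: "inV (\<lambda>N. H a' N * H b N)" using less a Cons by simp
      have i2: "inV (\<lambda>N. H a N * H b' N)" using less a Cons by simp
      have i3: "inV (\<lambda>N. H a' N * H b' N)" using less a Cons by simp
      show ?thesis using inV.add[OF inV.add[OF inV_Op[OF i1] inV_Op[OF i2]] inV_Op[OF i3]]
        by (simp add: e inV_cong)
    qed
  qed
qed

lemma inV_mult: "inV f \<Longrightarrow> inV g \<Longrightarrow> inV (\<lambda>N. f N * g N)"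
proof (induction arbitrary: g rule: inV.induct)
  case (base a)
  from base.prems show ?case
  proof (induction rule: inV.induct)
    case (base b) then show ?case by (rule inV_HH)
  next
    case (scale f c) then show ?case using inV.scale[OF scale.IH, of c] by (simp add: algebra_simps)
  next
    case (add f g) then show ?case using inV.add[OF add.IH] by (simp add: algebra_simps)
  qed
next
  case (scale f c) then show ?case using inV.scale[OF scale.IH[OF scale.prems], of c] by (simp add: algebra_simps)
next
  case (add f g') then show ?case using inV.add[OF add.IH[OF add.prems]] by (simp add: algebra_simps)
qed

lemma inV_power: "inV f \<Longrightarrow> inV (\<lambda>N. f N ^ e)"
  by (induction e) (auto simp: inV_const intro: inV_mult)

lemma inV_prod: "finite S \<Longrightarrow> (\<And>i. i \<in> S \<Longrightarrow> inV (f i)) \<Longrightarrow> inV (\<lambda>N. \<Prod>i\<in>S. f i N)"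
proof (induction S rule: finite_induct)
  case empty thus ?case using inV_const[of 1] by simp
next
  case (insert x F)
  then show ?case by (simp add: inV_mult)
qed

lemma root_ex: "0 < d \<Longrightarrow> \<exists>t::complex. t ^ d = s"
proof (cases "s = 0")
  case True
  assume "0 < d" then show ?thesis using True by (intro exI[of _ 0]) simp
next
  case False
  assume d: "0 < d"
  have "1 \<in> {z::complex. z ^ d = 1}" by simp
  with bij_betw_imp_surj_on[OF bij_betw_nth_root_unity[OF False d]] show ?thesis by blast
qed

lemma roots_sum:
  assumes d: "0 < d"
  shows "(\<Sum>j<d. (cis (2 * pi / d) ^ j) ^ M) = (if d dvd M then of_nat d else 0)"
proof -
  define w where "w = cis (2 * pi / d)"
  have wd: "w ^ d = 1" using d by (simp add: w_def DeMoivre)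
  have wM: "w ^ M = w ^ (M mod d)"
  proof -
    have "w ^ M = (w ^ d) ^ (M div d) * w ^ (M mod d)"
      by (subst div_mult_mod_eq[symmetric, of M d]) (simp only: power_add power_mult mult.commute)
    thus ?thesis using wd by simp
  qed
  have w1: "w ^ M = 1 \<longleftrightarrow> d dvd M"
  proof
    assume "d dvd M" then show "w ^ M = 1" using wM by simp
  next
    assume h: "w ^ M = 1"
    have inj: "inj_on (\<lambda>k. cis (2 * pi * real k / real d)) {..<d}"
      using bij_betw_roots_unity[OF d] by (simp add: bij_betw_def)
    have "w ^ (M mod d) = cis (2 * pi * real (M mod d) / real d)"
      by (simp add: w_def DeMoivre mult.commute)
    then have "cis (2 * pi * real (M mod d) / real d) = cis (2 * pi * real (0::nat) / real d)"
      using h wM by simp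
    then have "M mod d = 0" by (rule inj_onD[OF inj]) (use d in auto)
    thus "d dvd M" by auto
  qed
  have "(\<Sum>j<d. (w ^ j) ^ M) = (\<Sum>j<d. (w ^ M) ^ j)"
    by (simp add: power_mult[symmetric] mult.commute)
  also have "\<dots> = (if d dvd M then of_nat d else 0)"
  proof (cases "d dvd M")
    case True thus ?thesis using w1 by simp
  next
    case False
    have "(w ^ M) ^ d = (w ^ d) ^ M" by (simp only: power_mult[symmetric] mult.commute)
    then have "(w ^ M) ^ d = 1" using wd by simp
    then show ?thesis using False w1 by (simp add: sum_gp_strict)
  qed
  finally show ?thesis by (simp add: w_def)
qed

lemma npow_mult: "0 < a \<Longrightarrow> 0 < b \<Longrightarrow> npow (a * b) r = npow a r * npow b r"
  by (simp add: npow_def ln_mult distrib_left exp_add)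

lemma dil_tm:
  assumes d: "0 < d"
  shows "\<exists>cs ys. \<forall>M\<ge>1. (if d dvd M then tm x (M div d) else 0) = (\<Sum>j<d. cs j * tm (ys j) M)"
proof -
  obtain t where t: "t ^ d = snd x" using root_ex[OF d] by blast
  define w where "w = cis (2 * pi / d)"
  define c where "c = npow d (fst x) / of_nat d"
  have "(if d dvd M then tm x (M div d) else 0) = (\<Sum>j<d. c * tm (fst x, t * w ^ j) M)" if M: "M \<ge> 1" for M
  proof -
    have "(\<Sum>j<d. c * tm (fst x, t * w ^ j) M) = (\<Sum>j<d. c * t ^ M / npow M (fst x) * (w ^ j) ^ M)"
      by (intro sum.cong refl) (simp add: tm_def power_mult_distrib)
    also have "\<dots> = c * t ^ M / npow M (fst x) * (\<Sum>j<d. (w ^ j) ^ M)"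
      by (simp add: sum_distrib_left)
    also have "\<dots> = (if d dvd M then npow d (fst x) * t ^ M / npow M (fst x) else 0)"
      using roots_sum[OF d, of M] d by (simp add: w_def c_def)
    also have "\<dots> = (if d dvd M then tm x (M div d) else 0)"
    proof (cases "d dvd M")
      case True
      then obtain n where n: "M = d * n" by auto
      with M have "n > 0" by (cases n) auto
      have "npow M (fst x) = npow d (fst x) * npow n (fst x)" using n d \<open>n > 0\<close> npow_mult by simp
      moreover have "t ^ M = snd x ^ n" using n t by (simp add: power_mult)
      ultimately show ?thesis using True n d by (simp add: tm_def npow_nz)
    qed simp
    finally show ?thesis ..
  qed
  thus ?thesis by (intro exI[of _ "\<lambda>j. c"] exI[of _ "\<lambda>j. (fst x, t * w ^ j)"]) auto
qed

lemma sum_dvd: fixes d N :: nat shows "0 < d \<Longrightarrow> (\<Sum>M=1..N. if d dvd M then G M else 0) = (\<Sum>n=1..N div d. G (d * n))"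
proof (induction N)
  case 0 then show ?case by simp
next
  case (Suc N)
  show ?case
  proof (cases "d dvd Suc N")
    case True
    then have "Suc N div d = Suc (N div d)" using Suc.prems
      by (simp add: div_Suc dvd_eq_mod_eq_0)
    moreover have "d * Suc (N div d) = Suc N" using True calculation
      by (metis dvd_mult_div_cancel)
    ultimately show ?thesis using Suc True by simp
  next
    case False
    then have "Suc N div d = N div d" using Suc.prems
      by (simp add: div_Suc dvd_eq_mod_eq_0)
    then show ?thesis using Suc False by simp
  qed
qed

lemma inV_dil: "0 < d \<Longrightarrow> inV (\<lambda>N. H a (N div d))"
proof (induction a)
  case Nil then show ?case by (simp add: H_Nil inV_const)
next
  case (Cons x a)
  obtain cs ys where cs: "\<forall>M\<ge>1. (if d dvd M then tm x (M div d) else 0) = (\<Sum>j<d. cs j * tm (ys j) M)"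
    using dil_tm[OF Cons.prems] by blast
  have e: "H (x # a) (N div d) = (\<Sum>j<d. cs j * (\<Sum>M=1..N. tm (ys j) M * H a ((M - 1) div d)))" for N
  proof -
    have "H (x # a) (N div d) = (\<Sum>n=1..N div d. tm x n * H a (n - 1))" by (simp add: H_Cons)
    also have "\<dots> = (\<Sum>n=1..N div d. tm x ((d * n) div d) * H a ((d * n - 1) div d))"
    proof (intro sum.cong refl)
      fix n assume "n \<in> {1..N div d}"
      then obtain k where k: "n = Suc k" by (cases n) auto
      have "(d * n - 1) div d = k"
      proof -
        have "d * n - 1 = (d - 1) + k * d" using k Cons.prems by (simp add: algebra_simps)
        moreover have "((d - 1) + k * d) div d = k + (d - 1) div d"
          using Cons.prems by (intro div_mult_self1) simp
        ultimately show ?thesis using Cons.prems by simp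
      qed
      thus "tm x n * H a (n - 1) = tm x ((d * n) div d) * H a ((d * n - 1) div d)"
        using k Cons.prems by simp
    qed
    also have "\<dots> = (\<Sum>M=1..N. if d dvd M then tm x (M div d) * H a ((M - 1) div d) else 0)"
      by (subst sum_dvd[OF Cons.prems]) (rule refl)
    also have "\<dots> = (\<Sum>M=1..N. (if d dvd M then tm x (M div d) else 0) * H a ((M - 1) div d))"
      by (intro sum.cong refl) simp
    also have "\<dots> = (\<Sum>M=1..N. (\<Sum>j<d. cs j * tm (ys j) M) * H a ((M - 1) div d))"
      using cs by (intro sum.cong refl) simp
    also have "\<dots> = (\<Sum>M=1..N. \<Sum>j<d. cs j * (tm (ys j) M * H a ((M - 1) div d)))"
      by (intro sum.cong refl) (simp add: sum_distrib_right mult.assoc)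
    also have "\<dots> = (\<Sum>j<d. \<Sum>M=1..N. cs j * (tm (ys j) M * H a ((M - 1) div d)))"
      by (rule sum.swap)
    also have "\<dots> = (\<Sum>j<d. cs j * (\<Sum>M=1..N. tm (ys j) M * H a ((M - 1) div d)))"
      by (intro sum.cong refl) (simp add: sum_distrib_left)
    finally show ?thesis .
  qed
  have "inV (\<lambda>N. \<Sum>M=1..N. tm (ys j) M * H a ((M - 1) div d))" for j
    using inV_Op[OF Cons.IH[OF Cons.prems], of "ys j"] by simp
  then have "inV (\<lambda>N. \<Sum>j<d. cs j * (\<Sum>M=1..N. tm (ys j) M * H a ((M - 1) div d)))"
    by (intro inV_sum inV.scale) auto
  then show ?case by (rule inV_cong) (simp only: e[symmetric])
qed


lemma inV_repr: "inV f \<Longrightarrow> \<exists>B c. finite B \<and> (\<forall>N. f N = (\<Sum>\<beta>\<in>B. c \<beta> * H \<beta> N))"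
proof (induction rule: inV.induct)
  case (base b)
  show ?case by (intro exI[of _ "{b}"] exI[of _ "\<lambda>_. 1"]) simp
next
  case (scale f c0)
  then obtain B c where "finite B" "\<forall>N. f N = (\<Sum>\<beta>\<in>B. c \<beta> * H \<beta> N)" by blast
  then show ?case by (intro exI[of _ B] exI[of _ "\<lambda>\<beta>. c0 * c \<beta>"]) (simp add: sum_distrib_left mult.assoc)
next
  case (add f g)
  from add.IH obtain B1 c1 B2 c2 where h: "finite B1" "\<forall>N. f N = (\<Sum>\<beta>\<in>B1. c1 \<beta> * H \<beta> N)"
    "finite B2" "\<forall>N. g N = (\<Sum>\<beta>\<in>B2. c2 \<beta> * H \<beta> N)" by blast
  define c where "c = (\<lambda>\<beta>. (if \<beta> \<in> B1 then c1 \<beta> else 0) + (if \<beta> \<in> B2 then c2 \<beta> else 0))"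
  have "f N + g N = (\<Sum>\<beta>\<in>B1 \<union> B2. c \<beta> * H \<beta> N)" for N
  proof -
    have "(\<Sum>\<beta>\<in>B1 \<union> B2. c \<beta> * H \<beta> N) = (\<Sum>\<beta>\<in>B1 \<union> B2. (if \<beta> \<in> B1 then c1 \<beta> * H \<beta> N else 0))
       + (\<Sum>\<beta>\<in>B1 \<union> B2. (if \<beta> \<in> B2 then c2 \<beta> * H \<beta> N else 0))"
      unfolding sum.distrib[symmetric] by (intro sum.cong refl) (simp add: c_def distrib_right)
    also have "\<dots> = (\<Sum>\<beta>\<in>(B1 \<union> B2) \<inter> B1. c1 \<beta> * H \<beta> N) + (\<Sum>\<beta>\<in>(B1 \<union> B2) \<inter> B2. c2 \<beta> * H \<beta> N)"
      using h by (simp only: sum.inter_restrict finite_Un)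
    also have "\<dots> = (\<Sum>\<beta>\<in>B1. c1 \<beta> * H \<beta> N) + (\<Sum>\<beta>\<in>B2. c2 \<beta> * H \<beta> N)"
      by (simp add: Int_absorb1 Int_absorb2)
    finally show ?thesis using h by simp
  qed
  then show ?case using h by (intro exI[of _ "B1 \<union> B2"] exI[of _ c]) simp
qed

theorem theorem6p1:
  fixes m :: nat and p :: "nat \<Rightarrow> nat" and \<alpha> :: "nat \<Rightarrow> word"
    and e :: "nat \<Rightarrow> nat" and z q :: complex
  assumes "\<forall>j<m. p j > 0"
  shows "\<exists>B :: word set. \<exists>c :: word \<Rightarrow> complex. finite B \<and>
    (\<forall>k::nat. k \<ge> 1 \<longrightarrow>
      (\<Sum>n=1..k. z ^ n * npow n q * (\<Prod>j<m. (H (\<alpha> j) (p j * n)) ^ (e j)))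
      = (\<Sum>\<beta>\<in>B. c \<beta> * H \<beta> (Lcm (p ` {..<m}) * k)))"
proof -
  define P where "P = Lcm (p ` {..<m})"
  have "0 \<notin> p ` {..<m}" using assms by auto
  then have "Lcm (p ` {..<m}) \<noteq> 0" using Lcm_0_iff[of "p ` {..<m}"] by blast
  then have P0: "P > 0" by (metis P_def gr0I)
  have dv: "p j dvd P" if "j < m" for j
    unfolding P_def using that by (simp add: dvd_Lcm)
  define Q where "Q = (\<lambda>M. \<Prod>j<m. H (\<alpha> j) (M div (P div p j)) ^ e j)"
  have iQ: "inV Q"
  proof -
    have "inV (\<lambda>M. \<Prod>j\<in>{..<m}. H (\<alpha> j) (M div (P div p j)) ^ e j)"
    proof (intro inV_prod inV_power inV_dil)
      fix j assume "j \<in> {..<m}"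
      then show "0 < P div p j" using assms P0 dv
        by (metis dvd_div_eq_0_iff lessThan_iff not_gr0 P0 gr_implies_not0)
    qed simp
    thus ?thesis by (simp add: Q_def)
  qed
  define x :: letter where "x = (- q, z)"
  obtain cs ys where cs: "\<forall>M\<ge>1. (if P dvd M then tm x (M div P) else 0) = (\<Sum>j<P. cs j * tm (ys j) M)"
    using dil_tm[OF P0] by blast
  define F where "F = (\<lambda>N. \<Sum>j<P. cs j * (\<Sum>M=1..N. tm (ys j) M * Q M))"
  have iF: "inV F" unfolding F_def
    by (intro inV_sum inV.scale inV_tsum iQ) simp
  obtain B c where Bc: "finite B" "\<forall>N. F N = (\<Sum>\<beta>\<in>B. c \<beta> * H \<beta> N)"
    using inV_repr[OF iF] by blast
  have main: "(\<Sum>n=1..k. z ^ n * npow n q * (\<Prod>j<m. (H (\<alpha> j) (p j * n)) ^ (e j))) = F (P * k)" for k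
  proof -
    have "(\<Sum>n=1..k. z ^ n * npow n q * (\<Prod>j<m. (H (\<alpha> j) (p j * n)) ^ (e j)))
        = (\<Sum>n=1..(P * k) div P. (\<lambda>M. tm x (M div P) * Q M) (P * n))"
    proof -
      have "(P * k) div P = k" using P0 by simp
      moreover have "z ^ n * npow n q * (\<Prod>j<m. (H (\<alpha> j) (p j * n)) ^ (e j)) = tm x (P * n div P) * Q (P * n)" for n
      proof -
        have "P * n div (P div p j) = p j * n" if "j < m" for j
        proof -
          have pos: "P div p j > 0" using P0 dv[OF that] assms that
            by (metis dvd_div_eq_0_iff gr0I gr_implies_not0)
          have "P = p j * (P div p j)" using dv[OF that] by simp
          then have "P * n = (P div p j) * (p j * n)" by (metis mult.commute mult.left_commute)
          then show ?thesis using pos by (metis nonzero_mult_div_cancel_left not_gr0)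
        qed
        then have "Q (P * n) = (\<Prod>j<m. (H (\<alpha> j) (p j * n)) ^ (e j))" by (simp add: Q_def)
        moreover have "tm x (P * n div P) = z ^ n * npow n q"
          using P0 by (simp add: tm_def x_def npow_def exp_minus divide_inverse)
        ultimately show ?thesis by simp
      qed
      ultimately show ?thesis by simp
    qed
    also have "\<dots> = (\<Sum>M=1..P * k. if P dvd M then tm x (M div P) * Q M else 0)"
      by (rule sum_dvd[OF P0, symmetric])
    also have "\<dots> = (\<Sum>M=1..P * k. (if P dvd M then tm x (M div P) else 0) * Q M)"
      by (intro sum.cong refl) simp
    also have "\<dots> = (\<Sum>M=1..P * k. (\<Sum>j<P. cs j * tm (ys j) M) * Q M)"
      using cs by (intro sum.cong refl) simp
    also have "\<dots> = (\<Sum>M=1..P * k. \<Sum>j<P. cs j * (tm (ys j) M * Q M))"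
      by (intro sum.cong refl) (simp add: sum_distrib_right mult.assoc)
    also have "\<dots> = (\<Sum>j<P. \<Sum>M=1..P * k. cs j * (tm (ys j) M * Q M))"
      by (rule sum.swap)
    also have "\<dots> = F (P * k)"
      unfolding F_def by (intro sum.cong refl) (simp add: sum_distrib_left)
    finally show ?thesis .
  qed
  show ?thesis
    by (intro exI[of _ B] exI[of _ c]) (use Bc main in \<open>simp add: P_def\<close>)
qed

end
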